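(* Let $\mathbb{F}\in\{\mathbb{R},\mathbb{C}\}$ and $1\le k\leq N<M$. Suppose $\Phi\in\mathcal{P}(M,N)$ and $\Psi\in\mathcal{P}(M,M-N)$ are Naimark complements. Then $\Phi$ maximizes $V_k$ over $\mathcal{P}(M,N)$ if and only if $\Psi$ maximizes $CV_{M-k}$ over $\mathcal{P}(M,M-N)$.
   Context: $\mathcal{P}(M,n)$ is the set of Parseval frames for $\mathbb{F}^n$ with $M$ vectors, i.e. families $\{\varphi_i\}_{i=1}^M\subseteq\mathbb{F}^n$ whose $n\times M$ matrix $\Phi$ satisfies $\Phi\Phi^*=I$. $\Phi\in\mathcal{P}(M,N)$ and $\Psi\in\mathcal{P}(M,M-N)$ are Naimark complements if $\Psi^*\Psi=I-\Phi^*\Phi$. For $K\subseteq[M]$, $\Phi_K$ is the submatrix of columns indexed by $K$. For an $n\times m$ matrix $F$: if $m\le n$, $v_m(F)=\sqrt{\det(F^*F)}$; if $m\ge n$, $cv_m(F)=\sqrt{\det(FF^* )}$. Then $V_k(\Phi)=\sum_{|K|=k}v_k(\Phi_K)$ for $k\le n$, and $CV_k(\Phi)=\sum_{|K|=k}cv_k(\Phi_K)$ for $k\ge n$. *)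

theory Defs
  imports Complex_Main "Jordan_Normal_Form.Determinant" "Jordan_Normal_Form.DL_Submatrix"
begin

definition scalars :: "bool \<Rightarrow> complex set" where
  "scalars is_real = (if is_real then \<real> else UNIV)"

definition adj :: "complex mat \<Rightarrow> complex mat" where
  "adj A = transpose_mat (map_mat cnj A)"

definition parseval :: "bool \<Rightarrow> nat \<Rightarrow> nat \<Rightarrow> complex mat \<Rightarrow> bool" where
  "parseval is_real M n Phi \<longleftrightarrow>
     Phi \<in> carrier_mat n M \<and> (\<forall>i<n. \<forall>j<M. Phi $$ (i,j) \<in> scalars is_real) \<and>
     Phi * adj Phi = 1\<^sub>m n"

definition naimark_complements :: "complex mat \<Rightarrow> complex mat \<Rightarrow> bool" where
  "naimark_complements Phi Psi \<longleftrightarrow> adj Psi * Psi = 1\<^sub>m (dim_col Phi) - adj Phi * Phi"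

definition cols_sub :: "complex mat \<Rightarrow> nat set \<Rightarrow> complex mat" where
  "cols_sub Phi K = submatrix Phi UNIV K"

text \<open>v_m(F) = sqrt(det(F^* F)), cv_m(F) = sqrt(det(F F^*)); these determinants are real
  and nonnegative, so we take the real part.\<close>
definition vol :: "complex mat \<Rightarrow> real" where
  "vol F = sqrt (Re (det (adj F * F)))"

definition covol :: "complex mat \<Rightarrow> real" where
  "covol F = sqrt (Re (det (F * adj F)))"

definition V :: "nat \<Rightarrow> complex mat \<Rightarrow> real" where
  "V k Phi = (\<Sum>K\<in>{K. K \<subseteq> {..<dim_col Phi} \<and> card K = k}. vol (cols_sub Phi K))"

definition CV :: "nat \<Rightarrow> complex mat \<Rightarrow> real" where
  "CV k Phi = (\<Sum>K\<in>{K. K \<subseteq> {..<dim_col Phi} \<and> card K = k}. covol (cols_sub Phi K))"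

end

theory Submission
  imports Defs
begin


lemma adj_carrier[simp]: "A \<in> carrier_mat n m \<Longrightarrow> adj A \<in> carrier_mat m n"
  unfolding adj_def by auto
lemma adj_dims[simp]: "dim_row (adj A) = dim_col A" "dim_col (adj A) = dim_row A"
  unfolding adj_def by auto
lemma adj_index[simp]: "i < dim_col A \<Longrightarrow> j < dim_row A \<Longrightarrow> adj A $$ (i,j) = cnj (A $$ (j,i))"
  unfolding adj_def by auto
lemma adj_adj[simp]: "adj (adj A) = A"
  by (rule eq_matI) auto
lemma adj_one[simp]: "adj (1\<^sub>m n) = 1\<^sub>m n"
  by (rule eq_matI) auto
lemma adj_zero[simp]: "adj (0\<^sub>m n m) = 0\<^sub>m m n"
  by (rule eq_matI) auto
lemma adj_mult: "A \<in> carrier_mat n m \<Longrightarrow> B \<in> carrier_mat m p \<Longrightarrow> adj (A * B) = adj B * adj A"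
  by (rule eq_matI) (auto simp: scalar_prod_def cnj_sum intro!: sum.cong)
lemma adj_minus: "A \<in> carrier_mat n m \<Longrightarrow> B \<in> carrier_mat n m \<Longrightarrow> adj (A - B) = adj A - adj B"
  by (rule eq_matI) auto
lemma adj_plus: "A \<in> carrier_mat n m \<Longrightarrow> B \<in> carrier_mat n m \<Longrightarrow> adj (A + B) = adj A + adj B"
  by (rule eq_matI) auto
lemma adj_smult: "adj (c \<cdot>\<^sub>m A) = cnj c \<cdot>\<^sub>m adj A"
  by (rule eq_matI) auto

definition tr :: "complex mat \<Rightarrow> complex" where "tr A = (\<Sum>i<dim_row A. A $$ (i,i))"

lemma tr_one[simp]: "tr (1\<^sub>m n) = of_nat n" unfolding tr_def by simp
lemma tr_minus: "A \<in> carrier_mat n n \<Longrightarrow> B \<in> carrier_mat n n \<Longrightarrow> tr (A - B) = tr A - tr B"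
  unfolding tr_def by (auto simp: sum_subtractf)

definition rmat :: "complex mat \<Rightarrow> bool" where
  "rmat A \<longleftrightarrow> (\<forall>i<dim_row A. \<forall>j<dim_col A. A $$ (i,j) \<in> \<real>)"

lemma rmat_mult: "A \<in> carrier_mat n m \<Longrightarrow> B \<in> carrier_mat m p \<Longrightarrow> rmat A \<Longrightarrow> rmat B \<Longrightarrow> rmat (A * B)"
  unfolding rmat_def by (auto simp: scalar_prod_def intro!: sum_in_Reals)
lemma rmat_adj: "rmat A \<Longrightarrow> rmat (adj A)"
  unfolding rmat_def by (auto simp: Reals_cnj_iff)
lemma rmat_minus: "A \<in> carrier_mat n m \<Longrightarrow> B \<in> carrier_mat n m \<Longrightarrow> rmat A \<Longrightarrow> rmat B \<Longrightarrow> rmat (A - B)"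
  unfolding rmat_def by auto
lemma rmat_plus: "A \<in> carrier_mat n m \<Longrightarrow> B \<in> carrier_mat n m \<Longrightarrow> rmat A \<Longrightarrow> rmat B \<Longrightarrow> rmat (A + B)"
  unfolding rmat_def by auto
lemma rmat_one: "rmat (1\<^sub>m n)"
  unfolding rmat_def by auto
lemma rmat_smult: "c \<in> \<real> \<Longrightarrow> rmat A \<Longrightarrow> rmat (c \<cdot>\<^sub>m A)"
  unfolding rmat_def by auto




lemma tr_comm: assumes A: "A \<in> carrier_mat n m" and B: "B \<in> carrier_mat m n" shows "tr (A * B) = tr (B * A)"
proof -
  have "tr (A * B) = (\<Sum>i<n. \<Sum>k<m. A $$ (i,k) * B $$ (k,i))"
    unfolding tr_def using A B by (auto simp: scalar_prod_def atLeast0LessThan intro!: sum.cong)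
  also have "\<dots> = (\<Sum>k<m. \<Sum>i<n. B $$ (k,i) * A $$ (i,k))"
    by (subst sum.swap) (simp add: mult.commute)
  also have "\<dots> = tr (B * A)"
    unfolding tr_def using A B by (auto simp: scalar_prod_def atLeast0LessThan intro!: sum.cong)
  finally show ?thesis .
qed

lemma sylvester:
  fixes A B :: "'a :: idom mat"
  assumes A: "A \<in> carrier_mat m k" and B: "B \<in> carrier_mat k m"
  shows "det (1\<^sub>m k - B * A) = det (1\<^sub>m m - A * B)"
proof -
  let ?X = "four_block_mat (1\<^sub>m m) A B (1\<^sub>m k)"
  let ?L1 = "four_block_mat (1\<^sub>m m) A (0\<^sub>m k m) (1\<^sub>m k)"
  let ?R1 = "four_block_mat (1\<^sub>m m - A * B) (0\<^sub>m m k) B (1\<^sub>m k)"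
  let ?L2 = "four_block_mat (1\<^sub>m m) (0\<^sub>m m k) B (1\<^sub>m k)"
  let ?R2 = "four_block_mat (1\<^sub>m m) A (0\<^sub>m k m) (1\<^sub>m k - B * A)"
  have AB: "A * B \<in> carrier_mat m m" and BA: "B * A \<in> carrier_mat k k" using A B by auto
  have c1: "1\<^sub>m m - A * B \<in> carrier_mat m m" and c2: "1\<^sub>m k - B * A \<in> carrier_mat k k" using AB BA by (auto intro: minus_carrier_mat)
  have b1: "1\<^sub>m m * (1\<^sub>m m - A * B) + A * B = 1\<^sub>m m"
  proof -
    have "1\<^sub>m m * (1\<^sub>m m - A * B) = 1\<^sub>m m - A * B" using c1 by (rule left_mult_one_mat)
    then show ?thesis using carrier_matD[OF A] carrier_matD[OF B] by (auto intro!: eq_matI)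
  qed
  have b2: "B * A + 1\<^sub>m k * (1\<^sub>m k - B * A) = 1\<^sub>m k"
  proof -
    have "1\<^sub>m k * (1\<^sub>m k - B * A) = 1\<^sub>m k - B * A" using c2 by (rule left_mult_one_mat)
    then show ?thesis using carrier_matD[OF A] carrier_matD[OF B] by (auto intro!: eq_matI)
  qed
  have e1: "?L1 * ?R1 = ?X"
    apply (subst mult_four_block_mat[OF one_carrier_mat A zero_carrier_mat one_carrier_mat c1 zero_carrier_mat B one_carrier_mat])
    using A B AB b1 by simp
  have e2: "?L2 * ?R2 = ?X"
    apply (subst mult_four_block_mat[OF one_carrier_mat zero_carrier_mat B one_carrier_mat one_carrier_mat A zero_carrier_mat c2])
    using A B BA b2 by simp
  have d1: "det ?X = det (1\<^sub>m m - A * B)"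
  proof -
    have "det ?X = det ?L1 * det ?R1" unfolding e1[symmetric]
      by (rule det_mult[of _ "m+k"]) (use A B AB in auto)
    also have "det ?L1 = 1" by (subst det_four_block_mat_lower_left_zero[where n=m and m=k]) (use A in auto)
    also have "det ?R1 = det (1\<^sub>m m - A * B)"
      by (subst det_four_block_mat_upper_right_zero[where n=m and m=k]) (use A B AB in auto)
    finally show ?thesis by simp
  qed
  have d2: "det ?X = det (1\<^sub>m k - B * A)"
  proof -
    have "det ?X = det ?L2 * det ?R2" unfolding e2[symmetric]
      by (rule det_mult[of _ "m+k"]) (use A B BA in auto)
    also have "det ?L2 = 1" by (subst det_four_block_mat_upper_right_zero[where n=m and m=k]) (use B in auto)
    also have "det ?R2 = det (1\<^sub>m k - B * A)"
      by (subst det_four_block_mat_lower_left_zero[where n=m and m=k]) (use A B BA in auto)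
    finally show ?thesis by simp
  qed
  show ?thesis using d1 d2 by simp
qed




lemma card_restrict: "K \<subseteq> {..<M} \<Longrightarrow> card {j. j < M \<and> j \<in> K} = card K"
proof -
  assume K: "K \<subseteq> {..<M}"
  have "{j. j < M \<and> j \<in> K} = K" using K by blast
  then show ?thesis by simp
qed

lemma pick_UNIV[simp]: "pick UNIV i = i"
proof -
  have c: "card {a\<in>(UNIV::nat set). a < i} = i" by simp
  have "pick UNIV (card {a\<in>(UNIV::nat set). a < i}) = i" by (rule pick_card_in_set) simp
  then show ?thesis unfolding c .
qed

lemma pick_bij: assumes fin: "finite K" shows "bij_betw (pick K) {..<card K} K"
proof (rule bij_betw_imageI)
  show "inj_on (pick K) {..<card K}"
  proof (rule inj_onI)
    fix i j assume i: "i \<in> {..<card K}" and j: "j \<in> {..<card K}" and e: "pick K i = pick K j"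
    have i': "i < card K" and j': "j < card K" using i j by simp_all
    show "i = j"
    proof (rule ccontr)
      assume "i \<noteq> j"
      then consider "i < j" | "j < i" by linarith
      then show False
      proof cases
        case 1
        have "pick K i < pick K j" by (rule pick_mono_le[OF j' 1])
        then show False using e by simp
      next
        case 2
        have "pick K j < pick K i" by (rule pick_mono_le[OF i' 2])
        then show False using e by simp
      qed
    qed
  qed
  show "pick K ` {..<card K} = K"
  proof
    show "pick K ` {..<card K} \<subseteq> K"
    proof
      fix x assume "x \<in> pick K ` {..<card K}"
      then obtain i where i: "i < card K" and x: "x = pick K i" by blast
      show "x \<in> K" unfolding x by (rule pick_in_set_le[OF i])
    qed
    show "K \<subseteq> pick K ` {..<card K}"
    proof
      fix x assume x: "x \<in> K"
      have sub: "{a\<in>K. a < x} \<subset> K" using x by blast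
      have c: "card {a\<in>K. a < x} < card K" by (rule psubset_card_mono[OF fin sub])
      have "pick K (card {a\<in>K. a < x}) = x" by (rule pick_card_in_set[OF x])
      then have "x = pick K (card {a\<in>K. a < x})" by simp
      then show "x \<in> pick K ` {..<card K}" by (rule image_eqI) (simp add: c)
    qed
  qed
qed

lemma cols_sub_carrier: assumes "X \<in> carrier_mat n M" "K \<subseteq> {..<M}"
  shows "cols_sub X K \<in> carrier_mat n (card K)"
  using assms card_restrict[OF assms(2)] unfolding cols_sub_def by (auto simp: dim_submatrix)

lemma cols_sub_index: assumes "X \<in> carrier_mat n M" "K \<subseteq> {..<M}" "i < n" "j < card K"
  shows "cols_sub X K $$ (i,j) = X $$ (i, pick K j)"
  using assms card_restrict[OF assms(2)] unfolding cols_sub_def by (subst submatrix_index) auto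

lemma pick_lt: assumes "K \<subseteq> {..<M}" "j < card K" shows "pick K j < M"
  using pick_in_set_le[OF assms(2)] assms(1) by auto

lemma gram_sub: assumes X: "X \<in> carrier_mat n M" and K: "K \<subseteq> {..<M}" and i: "i < card K" and j: "j < card K"
  shows "(adj (cols_sub X K) * cols_sub X K) $$ (i,j) = (adj X * X) $$ (pick K i, pick K j)"
proof -
  have C: "cols_sub X K \<in> carrier_mat n (card K)" by (rule cols_sub_carrier[OF X K])
  have pi: "pick K i < M" and pj: "pick K j < M" using pick_lt[OF K] i j by auto
  show ?thesis using C X i j pi pj
    by (auto simp: scalar_prod_def cols_sub_index[OF X K] intro!: sum.cong)
qed

lemma outer_sub: assumes X: "X \<in> carrier_mat n M" and K: "K \<subseteq> {..<M}" and a: "a < n" and b: "b < n"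
  shows "(cols_sub X K * adj (cols_sub X K)) $$ (a,b) = (\<Sum>j\<in>K. X $$ (a,j) * cnj (X $$ (b,j)))"
proof -
  have C: "cols_sub X K \<in> carrier_mat n (card K)" by (rule cols_sub_carrier[OF X K])
  have fK: "finite K" using K finite_subset by blast
  have "(cols_sub X K * adj (cols_sub X K)) $$ (a,b) = (\<Sum>i<card K. X $$ (a, pick K i) * cnj (X $$ (b, pick K i)))"
    using C X a b by (auto simp: scalar_prod_def cols_sub_index[OF X K] atLeast0LessThan intro!: sum.cong)
  also have "\<dots> = (\<Sum>j\<in>K. X $$ (a,j) * cnj (X $$ (b,j)))"
    using sum.reindex_bij_betw[OF pick_bij[OF fK], of "\<lambda>j. X $$ (a,j) * cnj (X $$ (b,j))"] by simp
  finally show ?thesis .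
qed

lemma vol_covol:
  assumes Phi: "Phi \<in> carrier_mat N M" and Psi: "Psi \<in> carrier_mat m M"
    and PP: "Psi * adj Psi = 1\<^sub>m m" and C: "adj Psi * Psi = 1\<^sub>m M - adj Phi * Phi"
    and K: "K \<subseteq> {..<M}"
  shows "vol (cols_sub Phi K) = covol (cols_sub Psi ({..<M} - K))"
proof -
  define k where "k = card K"
  define Kc where "Kc = {..<M} - K"
  have Kc: "Kc \<subseteq> {..<M}" unfolding Kc_def by auto
  define A where "A = cols_sub Psi K"
  define B where "B = cols_sub Psi Kc"
  have A: "A \<in> carrier_mat m k" unfolding A_def k_def by (rule cols_sub_carrier[OF Psi K])
  have B: "B \<in> carrier_mat m (card Kc)" unfolding B_def by (rule cols_sub_carrier[OF Psi Kc])
  have F: "cols_sub Phi K \<in> carrier_mat N k" unfolding k_def by (rule cols_sub_carrier[OF Phi K])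
  have fK: "finite K" using K finite_subset by blast
  have C2: "adj Phi * Phi = 1\<^sub>m M - adj Psi * Psi"
  proof (rule eq_matI)
    fix i j assume "i < dim_row (1\<^sub>m M - adj Psi * Psi)" "j < dim_col (1\<^sub>m M - adj Psi * Psi)"
    then have ij: "i < M" "j < M" using Psi by auto
    have "(adj Psi * Psi) $$ (i,j) = (1\<^sub>m M - adj Phi * Phi) $$ (i,j)" using C by simp
    then show "(adj Phi * Phi) $$ (i,j) = (1\<^sub>m M - adj Psi * Psi) $$ (i,j)"
      using ij Phi Psi by auto
  qed (use Phi Psi in auto)
  have e1: "adj (cols_sub Phi K) * cols_sub Phi K = 1\<^sub>m k - adj A * A"
  proof (rule eq_matI)
    fix i j assume "i < dim_row (1\<^sub>m k - adj A * A)" "j < dim_col (1\<^sub>m k - adj A * A)"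
    then have i: "i < k" and j: "j < k" using A by auto
    have pi: "pick K i < M" and pj: "pick K j < M" using pick_lt[OF K] i j k_def by auto
    have inj: "pick K i = pick K j \<longleftrightarrow> i = j"
      using bij_betw_imp_inj_on[OF pick_bij[OF fK]] i j k_def by (auto dest: inj_onD)
    have "(adj (cols_sub Phi K) * cols_sub Phi K) $$ (i,j) = (adj Phi * Phi) $$ (pick K i, pick K j)"
      using gram_sub[OF Phi K] i j k_def by auto
    also have "\<dots> = (1\<^sub>m M - adj Psi * Psi) $$ (pick K i, pick K j)" using C2 by simp
    also have "\<dots> = (if i = j then 1 else 0) - (adj Psi * Psi) $$ (pick K i, pick K j)"
      using pi pj inj Psi by auto
    also have "(adj Psi * Psi) $$ (pick K i, pick K j) = (adj A * A) $$ (i,j)"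
      unfolding A_def using gram_sub[OF Psi K] i j k_def by auto
    finally show "(adj (cols_sub Phi K) * cols_sub Phi K) $$ (i,j) = (1\<^sub>m k - adj A * A) $$ (i,j)"
      using i j A by auto
  qed (use A F in auto)
  have e2: "B * adj B = 1\<^sub>m m - A * adj A"
  proof (rule eq_matI)
    fix a b assume "a < dim_row (1\<^sub>m m - A * adj A)" "b < dim_col (1\<^sub>m m - A * adj A)"
    then have a: "a < m" and b: "b < m" using A by auto
    define f where "f = (\<lambda>j. Psi $$ (a,j) * cnj (Psi $$ (b,j)))"
    have "(B * adj B) $$ (a,b) = sum f Kc" unfolding B_def f_def by (rule outer_sub[OF Psi Kc a b])
    moreover have "(A * adj A) $$ (a,b) = sum f K" unfolding A_def f_def by (rule outer_sub[OF Psi K a b])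
    moreover have "sum f {..<M} = (Psi * adj Psi) $$ (a,b)"
      using Psi a b by (auto simp: scalar_prod_def f_def atLeast0LessThan intro!: sum.cong)
    moreover have "sum f {..<M} = sum f K + sum f Kc"
      unfolding Kc_def using sum.subset_diff[OF K finite_lessThan] by (simp add: add.commute)
    ultimately show "(B * adj B) $$ (a,b) = (1\<^sub>m m - A * adj A) $$ (a,b)"
      using PP a b A by (auto simp: eq_diff_eq add_eq_0_iff add.commute)
  qed (use A B in auto)
  have "det (1\<^sub>m k - adj A * A) = det (1\<^sub>m m - A * adj A)"
    by (rule sylvester[OF A]) (use A in auto)
  then show ?thesis unfolding vol_def covol_def e1 B_def[symmetric] Kc_def[symmetric] e2 by simp
qed

lemma V_CV:
  assumes Phi: "Phi \<in> carrier_mat N M" and Psi: "Psi \<in> carrier_mat m M"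
    and PP: "Psi * adj Psi = 1\<^sub>m m" and C: "adj Psi * Psi = 1\<^sub>m M - adj Phi * Phi"
    and k: "k \<le> M"
  shows "V k Phi = CV (M - k) Psi"
proof -
  define S where "S = (\<lambda>k. {K. K \<subseteq> {..<M} \<and> card K = k})"
  have bij: "bij_betw (\<lambda>K. {..<M} - K) (S k) (S (M - k))"
  proof (rule bij_betw_byWitness[where f' = "\<lambda>K. {..<M} - K"])
    show "\<forall>a\<in>S k. {..<M} - ({..<M} - a) = a" unfolding S_def by auto
    show "\<forall>a\<in>S (M - k). {..<M} - ({..<M} - a) = a" unfolding S_def by auto
    show "(\<lambda>K. {..<M} - K) ` S k \<subseteq> S (M - k)" unfolding S_def
      by (auto simp: card_Diff_subset finite_subset)
    show "(\<lambda>K. {..<M} - K) ` S (M - k) \<subseteq> S k" unfolding S_def using k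
      by (auto simp: card_Diff_subset finite_subset)
  qed
  have "V k Phi = (\<Sum>K\<in>S k. vol (cols_sub Phi K))" unfolding V_def S_def using Phi by simp
  also have "\<dots> = (\<Sum>K\<in>S k. covol (cols_sub Psi ({..<M} - K)))"
    by (rule sum.cong) (auto simp: S_def intro: vol_covol[OF Phi Psi PP C])
  also have "\<dots> = (\<Sum>K\<in>S (M - k). covol (cols_sub Psi K))"
    using sum.reindex_bij_betw[OF bij, of "\<lambda>K. covol (cols_sub Psi K)"] by simp
  also have "\<dots> = CV (M - k) Psi" unfolding CV_def S_def using Psi by simp
  finally show ?thesis .
qed




definition E :: "nat \<Rightarrow> nat \<Rightarrow> complex mat" where
  "E M j = mat M 1 (\<lambda>(i,_). if i = j then 1 else 0)"

lemma E_carrier[simp]: "E M j \<in> carrier_mat M 1" unfolding E_def by auto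

lemma mult_E: assumes X: "X \<in> carrier_mat n M" and j: "j < M" and i: "i < n"
  shows "(X * E M j) $$ (i,0) = X $$ (i,j)"
proof -
  have "(X * E M j) $$ (i,0) = (\<Sum>l\<in>{0..<M}. X $$ (i,l) * (if l = j then 1 else 0))"
    using X i by (simp add: E_def scalar_prod_def)
  also have "\<dots> = (\<Sum>l\<in>{0..<M}. if l = j then X $$ (i,l) else 0)"
    by (rule sum.cong) auto
  also have "\<dots> = X $$ (i,j)" using j by (simp add: sum.delta')
  finally show ?thesis .
qed

definition stack :: "complex mat \<Rightarrow> complex mat \<Rightarrow> complex mat" where
  "stack A R = mat (Suc (dim_row A)) (dim_col A) (\<lambda>(i,j). if i < dim_row A then A $$ (i,j) else R $$ (0,j))"

lemma stack_carrier: "A \<in> carrier_mat r M \<Longrightarrow> stack A R \<in> carrier_mat (Suc r) M"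
  unfolding stack_def by auto

lemma stack_gram: assumes A: "A \<in> carrier_mat r M" and R: "R \<in> carrier_mat 1 M"
  shows "adj (stack A R) * stack A R = adj A * A + adj R * R"
proof (rule eq_matI)
  fix a b assume "a < dim_row (adj A * A + adj R * R)" "b < dim_col (adj A * A + adj R * R)"
  then have a: "a < M" and b: "b < M" using A R by auto
  have S: "stack A R \<in> carrier_mat (Suc r) M" by (rule stack_carrier[OF A])
  have "(adj (stack A R) * stack A R) $$ (a,b) = (\<Sum>i<Suc r. cnj (stack A R $$ (i,a)) * stack A R $$ (i,b))"
    using S a b by (simp add: scalar_prod_def atLeast0LessThan)
  also have "\<dots> = (\<Sum>i<r. cnj (A $$ (i,a)) * A $$ (i,b)) + cnj (R $$ (0,a)) * R $$ (0,b)"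
    using A a b by (simp add: stack_def)
  also have "\<dots> = (adj A * A + adj R * R) $$ (a,b)"
    using A R a b by (simp add: scalar_prod_def atLeast0LessThan)
  finally show "(adj (stack A R) * stack A R) $$ (a,b) = (adj A * A + adj R * R) $$ (a,b)" .
qed (use A R stack_carrier[OF A] in auto)

lemma stack_orth: assumes A: "A \<in> carrier_mat r M" and R: "R \<in> carrier_mat 1 M"
  and AA: "A * adj A = 1\<^sub>m r" and RR: "R * adj R = 1\<^sub>m 1" and AR: "A * adj R = 0\<^sub>m r 1"
  shows "stack A R * adj (stack A R) = 1\<^sub>m (Suc r)"
proof (rule eq_matI)
  have S: "stack A R \<in> carrier_mat (Suc r) M" by (rule stack_carrier[OF A])
  fix i j assume "i < dim_row (1\<^sub>m (Suc r))" "j < dim_col (1\<^sub>m (Suc r))"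
  then have i: "i < Suc r" and j: "j < Suc r" by auto
  have e: "(stack A R * adj (stack A R)) $$ (i,j) = (\<Sum>l<M. stack A R $$ (i,l) * cnj (stack A R $$ (j,l)))"
    using S i j by (simp add: scalar_prod_def atLeast0LessThan)
  show "(stack A R * adj (stack A R)) $$ (i,j) = 1\<^sub>m (Suc r) $$ (i,j)"
  proof (cases "i < r")
    case True
    note ir = True
    show ?thesis
    proof (cases "j < r")
      case True
      have "(A * adj A) $$ (i,j) = (\<Sum>l<M. A $$ (i,l) * cnj (A $$ (j,l)))"
        using A ir True by (simp add: scalar_prod_def atLeast0LessThan)
      then show ?thesis using e AA ir True A by (simp add: stack_def)
    next
      case False
      then have jr: "j = r" using j by simp
      have "(A * adj R) $$ (i,0) = (\<Sum>l<M. A $$ (i,l) * cnj (R $$ (0,l)))"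
        using A R ir by (simp add: scalar_prod_def atLeast0LessThan)
      then show ?thesis using e AR ir jr A by (simp add: stack_def)
    qed
  next
    case False
    then have ir: "i = r" using i by simp
    show ?thesis
    proof (cases "j < r")
      case True
      have "(A * adj R) $$ (j,0) = (\<Sum>l<M. A $$ (j,l) * cnj (R $$ (0,l)))"
        using A R True by (simp add: scalar_prod_def atLeast0LessThan)
      then have "cnj ((A * adj R) $$ (j,0)) = (\<Sum>l<M. R $$ (0,l) * cnj (A $$ (j,l)))"
        by (simp add: cnj_sum mult.commute)
      then show ?thesis using e AR ir True A by (simp add: stack_def)
    next
      case False
      then have jr: "j = r" using j by simp
      have "(R * adj R) $$ (0,0) = (\<Sum>l<M. R $$ (0,l) * cnj (R $$ (0,l)))"
        using R by (simp add: scalar_prod_def atLeast0LessThan)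
      then show ?thesis using e RR ir jr A by (simp add: stack_def)
    qed
  qed
qed (use stack_carrier[OF A] in auto)

lemma rmat_stack: "A \<in> carrier_mat r M \<Longrightarrow> R \<in> carrier_mat 1 M \<Longrightarrow> rmat A \<Longrightarrow> rmat R \<Longrightarrow> rmat (stack A R)"
  unfolding rmat_def stack_def by auto

lemma rmat_E: "rmat (E M j)" unfolding rmat_def E_def by auto




lemma minus_zero_eq: fixes A B :: "complex mat" assumes "A \<in> carrier_mat n m" "B \<in> carrier_mat n m" "A - B = 0\<^sub>m n m"
  shows "A = B"
proof (rule eq_matI)
  fix i j assume ij: "i < dim_row B" "j < dim_col B"
  then have i: "i < n" and j: "j < m" using assms(2) by auto
  have "(A - B) $$ (i,j) = A $$ (i,j) - B $$ (i,j)" using ij by simp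
  moreover have "(A - B) $$ (i,j) = 0" using assms(3) i j by simp
  ultimately show "A $$ (i,j) = B $$ (i,j)" by simp
qed (use assms in auto)

lemma gs_step:
  assumes P: "P \<in> carrier_mat M M" and PP: "P * P = P"
    and Psi: "Psi \<in> carrier_mat r M" and O: "Psi * adj Psi = 1\<^sub>m r"
    and PQ: "P * (adj Psi * Psi) = adj Psi * Psi"
    and inv: "\<forall>j<t. (adj Psi * Psi) * (P * E M j) = P * E M j"
    and re: "rmat P \<longrightarrow> rmat Psi"
  shows "\<exists>r' Psi'. Psi' \<in> carrier_mat r' M \<and> Psi' * adj Psi' = 1\<^sub>m r' \<and>
     P * (adj Psi' * Psi') = adj Psi' * Psi' \<and>
     (\<forall>j<Suc t. (adj Psi' * Psi') * (P * E M j) = P * E M j) \<and> (rmat P \<longrightarrow> rmat Psi')"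
proof -
  define Q where "Q = adj Psi * Psi"
  have Qc: "Q \<in> carrier_mat M M" unfolding Q_def using Psi by auto
  have aPsi: "adj Psi \<in> carrier_mat M r" using Psi by auto
  define c where "c = P * E M t"
  have cc: "c \<in> carrier_mat M 1" unfolding c_def by (rule mult_carrier_mat[OF P E_carrier])
  have Pc: "P * c = c" unfolding c_def using P PP by (simp add: assoc_mult_mat[symmetric, OF P P E_carrier])
  define W where "W = c - Q * c"
  have Wc: "W \<in> carrier_mat M 1" unfolding W_def using cc Qc by auto
  have PsiQ: "Psi * Q = Psi"
  proof -
    have "Psi * Q = (Psi * adj Psi) * Psi" unfolding Q_def using assoc_mult_mat[OF Psi aPsi Psi] by simp
    then show ?thesis using O Psi by simp
  qed
  have PsiW: "Psi * W = 0\<^sub>m r 1"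
  proof -
    have "Psi * W = Psi * c - Psi * (Q * c)" unfolding W_def
      by (rule mult_minus_distrib_mat[OF Psi cc]) (use Qc cc in auto)
    also have "Psi * (Q * c) = (Psi * Q) * c" using assoc_mult_mat[OF Psi Qc cc] by simp
    finally show ?thesis using PsiQ Psi cc by simp
  qed
  have PW: "P * W = W"
  proof -
    have "P * W = P * c - P * (Q * c)" unfolding W_def
      by (rule mult_minus_distrib_mat[OF P cc]) (use Qc cc in auto)
    also have "P * (Q * c) = (P * Q) * c" using assoc_mult_mat[OF P Qc cc] by simp
    finally show ?thesis using PQ Pc unfolding Q_def W_def by simp
  qed
  have cQW: "c = W + Q * c"
    unfolding W_def by (rule eq_matI) (use cc Qc in auto)
  have rQ: "rmat P \<Longrightarrow> rmat Q" unfolding Q_def using re Psi by (auto intro: rmat_mult[OF aPsi Psi] rmat_adj)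
  have rc: "rmat P \<Longrightarrow> rmat c" unfolding c_def using P by (auto intro: rmat_mult[OF P E_carrier] rmat_E)
  have rW: "rmat P \<Longrightarrow> rmat W" unfolding W_def using rQ rc Qc cc
    by (auto intro!: rmat_minus[OF cc] rmat_mult[OF Qc cc])
  show ?thesis
  proof (cases "W = 0\<^sub>m M 1")
    case True
    have "c = Q * c" by (rule minus_zero_eq[OF cc _ True[unfolded W_def]]) (use Qc cc in auto)
    then have "\<forall>j<Suc t. Q * (P * E M j) = P * E M j"
      using inv unfolding Q_def c_def by (metis less_Suc_eq)
    then show ?thesis using Psi O PQ re unfolding Q_def by blast
  next
    case False
    define s where "s = (\<Sum>l<M. (cmod (W $$ (l,0)))\<^sup>2)"
    have WW: "(adj W * W) $$ (0,0) = of_real s"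
    proof -
      have "(adj W * W) $$ (0,0) = (\<Sum>l<M. cnj (W $$ (l,0)) * W $$ (l,0))"
        using Wc by (simp add: scalar_prod_def atLeast0LessThan)
      also have "\<dots> = (\<Sum>l<M. of_real ((cmod (W $$ (l,0)))\<^sup>2))"
        by (rule sum.cong[OF refl]) (metis complex_norm_square mult.commute)
      finally show ?thesis unfolding s_def by simp
    qed
    have spos: "s > 0"
    proof -
      obtain l where l: "l < M" and nz: "W $$ (l,0) \<noteq> 0"
      proof -
        have "\<exists>l<M. W $$ (l,0) \<noteq> 0"
        proof (rule ccontr)
          assume "\<not> ?thesis"
          then have "W = 0\<^sub>m M 1" using Wc by (intro eq_matI) auto
          then show False using False by simp
        qed
        then show ?thesis using that by blast
      qed
      have "0 < (cmod (W $$ (l,0)))\<^sup>2" using nz by simp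
      also have "\<dots> \<le> s" unfolding s_def
        by (rule member_le_sum[of l "{..<M}" "\<lambda>l. (cmod (W $$ (l,0)))\<^sup>2"]) (use l in auto)
      finally show ?thesis .
    qed
    define a where "a = complex_of_real (1 / sqrt s)"
    have acnj: "cnj a = a" unfolding a_def by simp
    have aas: "a * a * of_real s = 1" unfolding a_def using spos
      by (simp flip: of_real_mult)
    have areal: "a \<in> \<real>" unfolding a_def by simp
    define U where "U = a \<cdot>\<^sub>m W"
    have Uc: "U \<in> carrier_mat M 1" unfolding U_def using Wc by simp
    have adjU: "adj U = a \<cdot>\<^sub>m adj W" unfolding U_def adj_smult acnj ..
    have aUc: "adj U \<in> carrier_mat 1 M" using Uc by simp
    have PsiU: "Psi * U = 0\<^sub>m r 1" unfolding U_def
      using mult_smult_distrib[OF Psi Wc, of a] PsiW by (auto intro!: eq_matI)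
    have UU: "adj U * U = 1\<^sub>m 1"
    proof (rule eq_matI)
      fix i j assume "i < dim_row (1\<^sub>m 1)" "j < dim_col (1\<^sub>m 1)"
      then have ij: "i = 0" "j = 0" by auto
      have "(adj U * U) $$ (0,0) = a * a * (adj W * W) $$ (0,0)"
        unfolding adjU U_def using Wc by (simp add: acnj scalar_prod_def sum_distrib_left mult.assoc mult.left_commute)
      then show "(adj U * U) $$ (i,j) = 1\<^sub>m 1 $$ (i,j)" using ij WW aas by simp
    qed (use Uc in auto)
    define R where "R = adj U"
    have Rc: "R \<in> carrier_mat 1 M" unfolding R_def by (rule aUc)
    define Psi' where "Psi' = stack Psi R"
    have Psi'c: "Psi' \<in> carrier_mat (Suc r) M" unfolding Psi'_def by (rule stack_carrier[OF Psi])
    have O': "Psi' * adj Psi' = 1\<^sub>m (Suc r)" unfolding Psi'_def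
      by (rule stack_orth[OF Psi Rc O]) (use UU PsiU in \<open>simp_all add: R_def\<close>)
    have G': "adj Psi' * Psi' = Q + U * adj U" unfolding Psi'_def Q_def
      using stack_gram[OF Psi Rc] by (simp add: R_def)
    have UaU: "U * adj U \<in> carrier_mat M M" using Uc by simp
    have PU: "P * U = U" unfolding U_def using mult_smult_distrib[OF P Wc, of a] PW by simp
    have PQ': "P * (Q + U * adj U) = Q + U * adj U"
    proof -
      have "P * (Q + U * adj U) = P * Q + P * (U * adj U)" by (rule mult_add_distrib_mat[OF P Qc UaU])
      also have "P * (U * adj U) = (P * U) * adj U" using assoc_mult_mat[OF P Uc aUc] by simp
      finally show ?thesis using PQ PU unfolding Q_def by simp
    qed
    have kill: "adj U * (Q * X) = 0\<^sub>m 1 1" if X: "X \<in> carrier_mat M 1" for X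
    proof -
      have PsiX: "Psi * X \<in> carrier_mat r 1" by (rule mult_carrier_mat[OF Psi X])
      have "adj U * (Q * X) = adj U * (adj Psi * (Psi * X))"
        unfolding Q_def using assoc_mult_mat[OF aPsi Psi X] by simp
      also have "\<dots> = (adj U * adj Psi) * (Psi * X)"
        using assoc_mult_mat[OF aUc aPsi PsiX] by simp
      also have "adj U * adj Psi = adj (Psi * U)" using adj_mult[OF Psi Uc] by simp
      also have "\<dots> = 0\<^sub>m 1 r" using PsiU by simp
      finally show ?thesis using left_mult_zero_mat[OF PsiX] by simp
    qed
    have new: "(Q + U * adj U) * X = Q * X + U * (adj U * X)" if X: "X \<in> carrier_mat M 1" for X
      using add_mult_distrib_mat[OF Qc UaU X] assoc_mult_mat[OF Uc aUc X] by simp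
    have old: "(Q + U * adj U) * (P * E M j) = P * E M j" if j: "j < t" for j
    proof -
      have X: "P * E M j \<in> carrier_mat M 1" by (rule mult_carrier_mat[OF P E_carrier])
      have QX: "Q * (P * E M j) = P * E M j" using inv j unfolding Q_def by simp
      have "adj U * (P * E M j) = 0\<^sub>m 1 1" using kill[OF X] QX by simp
      then show ?thesis using new[OF X] QX right_mult_zero_mat[OF Uc] right_add_zero_mat[OF X] by simp
    qed
    have cur: "(Q + U * adj U) * c = c"
    proof -
      have QcC: "Q * c \<in> carrier_mat M 1" by (rule mult_carrier_mat[OF Qc cc])
      have "adj U * c = adj U * W + adj U * (Q * c)"
        using mult_add_distrib_mat[OF aUc Wc QcC] cQW by simp
      also have "adj U * (Q * c) = 0\<^sub>m 1 1" by (rule kill[OF cc])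
      also have "adj U * W = (a * of_real s) \<cdot>\<^sub>m 1\<^sub>m 1"
      proof (rule eq_matI)
        fix i j assume "i < dim_row ((a * of_real s) \<cdot>\<^sub>m 1\<^sub>m 1)" "j < dim_col ((a * of_real s) \<cdot>\<^sub>m (1\<^sub>m 1 :: complex mat))"
        then have ij: "i = 0" "j = 0" by auto
        have "(adj U * W) $$ (0,0) = a * (adj W * W) $$ (0,0)"
          unfolding adjU using Wc by (simp add: scalar_prod_def sum_distrib_left mult.assoc)
        then show "(adj U * W) $$ (i,j) = ((a * of_real s) \<cdot>\<^sub>m 1\<^sub>m 1) $$ (i,j)" using ij WW by simp
      qed (use Wc Uc in auto)
      finally have aUc': "adj U * c = (a * of_real s) \<cdot>\<^sub>m 1\<^sub>m 1" using Wc by simp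
      have "U * (adj U * c) = W"
      proof (rule eq_matI)
        fix i j assume "i < dim_row W" "j < dim_col W"
        then have i: "i < M" and j: "j = 0" using Wc by auto
        have "(U * (adj U * c)) $$ (i,0) = U $$ (i,0) * (a * of_real s)"
          unfolding aUc' using Uc i by (simp add: scalar_prod_def)
        also have "\<dots> = (a * a * of_real s) * W $$ (i,0)" unfolding U_def using Wc i by simp
        finally show "(U * (adj U * c)) $$ (i,j) = W $$ (i,j)" using aas j by simp
      qed (use Uc Wc aUc' in auto)
      then have "(Q + U * adj U) * c = Q * c + W" using new[OF cc] by simp
      also have "\<dots> = c" using cQW comm_add_mat[OF QcC Wc] by simp
      finally show ?thesis .
    qed
    have all: "\<forall>j<Suc t. (adj Psi' * Psi') * (P * E M j) = P * E M j"
      unfolding G' using old cur unfolding c_def by (metis less_Suc_eq)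
    have rPsi': "rmat P \<longrightarrow> rmat Psi'"
    proof
      assume rP: "rmat P"
      have "rmat U" unfolding U_def by (rule rmat_smult[OF areal rW[OF rP]])
      then have "rmat R" unfolding R_def by (rule rmat_adj)
      then show "rmat Psi'" unfolding Psi'_def using rmat_stack[OF Psi Rc] re rP by simp
    qed
    show ?thesis using Psi'c O' PQ' G' all rPsi' by metis
  qed
qed




lemma gs_exists:
  assumes P: "P \<in> carrier_mat M M" and PP: "P * P = P"
  shows "\<exists>r Psi. Psi \<in> carrier_mat r M \<and> Psi * adj Psi = 1\<^sub>m r \<and>
     P * (adj Psi * Psi) = adj Psi * Psi \<and>
     (\<forall>j<t. (adj Psi * Psi) * (P * E M j) = P * E M j) \<and> (rmat P \<longrightarrow> rmat Psi)"
proof (induction t)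
  case 0
  define Z where "Z = (0\<^sub>m 0 M :: complex mat)"
  have Zc: "Z \<in> carrier_mat 0 M" unfolding Z_def by simp
  have ZZ: "Z * adj Z = 1\<^sub>m 0" unfolding Z_def by (rule eq_matI) auto
  have G: "adj Z * Z = 0\<^sub>m M M" unfolding Z_def by (simp add: left_mult_zero_mat)
  have "P * (adj Z * Z) = adj Z * Z" unfolding G using right_mult_zero_mat[OF P] by simp
  moreover have "rmat Z" unfolding rmat_def Z_def by simp
  ultimately show ?case using Zc ZZ by blast
next
  case (Suc t)
  then obtain r Psi where "Psi \<in> carrier_mat r M" "Psi * adj Psi = 1\<^sub>m r"
     "P * (adj Psi * Psi) = adj Psi * Psi"
     "\<forall>j<t. (adj Psi * Psi) * (P * E M j) = P * E M j" "rmat P \<longrightarrow> rmat Psi" by blast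
  from gs_step[OF P PP this] show ?case .
qed

lemma proj_factor:
  assumes P: "P \<in> carrier_mat M M" and PH: "adj P = P" and PP: "P * P = P"
  shows "\<exists>r Psi. Psi \<in> carrier_mat r M \<and> Psi * adj Psi = 1\<^sub>m r \<and> adj Psi * Psi = P \<and> (rmat P \<longrightarrow> rmat Psi)"
proof -
  obtain r Psi where Psi: "Psi \<in> carrier_mat r M" and O: "Psi * adj Psi = 1\<^sub>m r"
     and PQ: "P * (adj Psi * Psi) = adj Psi * Psi"
     and inv: "\<forall>j<M. (adj Psi * Psi) * (P * E M j) = P * E M j" and re: "rmat P \<longrightarrow> rmat Psi"
    using gs_exists[OF P PP, of M] by blast
  define Q where "Q = adj Psi * Psi"
  have aPsi: "adj Psi \<in> carrier_mat M r" using Psi by simp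
  have Qc: "Q \<in> carrier_mat M M" unfolding Q_def by (rule mult_carrier_mat[OF aPsi Psi])
  have QPc: "Q * P \<in> carrier_mat M M" by (rule mult_carrier_mat[OF Qc P])
  have QP: "Q * P = P"
  proof (rule eq_matI)
    fix i j assume "i < dim_row P" "j < dim_col P"
    then have i: "i < M" and j: "j < M" using P by auto
    have "(Q * P) $$ (i,j) = ((Q * P) * E M j) $$ (i,0)" using mult_E[OF QPc j i] by simp
    also have "(Q * P) * E M j = Q * (P * E M j)" by (rule assoc_mult_mat[OF Qc P E_carrier])
    also have "\<dots> = P * E M j" using inv j unfolding Q_def by simp
    also have "\<dots> $$ (i,0) = P $$ (i,j)" using mult_E[OF P j i] .
    finally show "(Q * P) $$ (i,j) = P $$ (i,j)" .
  qed (use Qc P in auto)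
  have adjQ: "adj Q = Q" unfolding Q_def using adj_mult[OF aPsi Psi] by simp
  have "Q = adj (P * Q)" using PQ adjQ unfolding Q_def by simp
  also have "\<dots> = adj Q * adj P" by (rule adj_mult[OF P Qc])
  also have "\<dots> = P" using adjQ PH QP by simp
  finally show ?thesis using Psi O re unfolding Q_def by blast
qed

lemma swap_compl:
  assumes X: "X \<in> carrier_mat n M" and Y: "Y \<in> carrier_mat m M"
    and C: "adj X * X = 1\<^sub>m M - adj Y * Y"
  shows "adj Y * Y = 1\<^sub>m M - adj X * X"
proof (rule eq_matI)
  fix i j assume "i < dim_row (1\<^sub>m M - adj X * X)" "j < dim_col (1\<^sub>m M - adj X * X)"
  then have ij: "i < M" "j < M" using X by auto
  have "(adj X * X) $$ (i,j) = (1\<^sub>m M - adj Y * Y) $$ (i,j)" using C by simp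
  then show "(adj Y * Y) $$ (i,j) = (1\<^sub>m M - adj X * X) $$ (i,j)"
    using ij X Y by auto
qed (use X Y in auto)

lemma completion:
  assumes Phi: "parseval s M n Phi" and nM: "n \<le> M"
  shows "\<exists>Psi. parseval s M (M - n) Psi \<and> adj Psi * Psi = 1\<^sub>m M - adj Phi * Phi"
proof -
  have Phic: "Phi \<in> carrier_mat n M" and ent: "\<forall>i<n. \<forall>j<M. Phi $$ (i,j) \<in> scalars s"
    and O: "Phi * adj Phi = 1\<^sub>m n" using Phi unfolding parseval_def by auto
  have aPhi: "adj Phi \<in> carrier_mat M n" using Phic by simp
  define G where "G = adj Phi * Phi"
  have Gc: "G \<in> carrier_mat M M" unfolding G_def by (rule mult_carrier_mat[OF aPhi Phic])
  have GG: "G * G = G"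
  proof -
    have "G * G = adj Phi * (Phi * (adj Phi * Phi))" unfolding G_def
      using assoc_mult_mat[OF aPhi Phic, of "adj Phi * Phi"] Gc[unfolded G_def] by simp
    also have "Phi * (adj Phi * Phi) = (Phi * adj Phi) * Phi" using assoc_mult_mat[OF Phic aPhi Phic] by simp
    also have "\<dots> = Phi" using O Phic by simp
    finally show ?thesis unfolding G_def .
  qed
  have adjG: "adj G = G" unfolding G_def using adj_mult[OF aPhi Phic] by simp
  define P where "P = 1\<^sub>m M - G"
  have Pc: "P \<in> carrier_mat M M" unfolding P_def by (rule minus_carrier_mat[OF Gc])
  have PH: "adj P = P" unfolding P_def using adj_minus[OF one_carrier_mat Gc] adjG by simp
  have PP: "P * P = P"
  proof -
    have "P * P = 1\<^sub>m M * P - G * P" unfolding P_def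
      by (rule minus_mult_distrib_mat[OF one_carrier_mat Gc]) (use Pc in \<open>simp add: P_def\<close>)
    also have "G * P = G * 1\<^sub>m M - G * G" unfolding P_def
      by (rule mult_minus_distrib_mat[OF Gc one_carrier_mat Gc])
    also have "\<dots> = 0\<^sub>m M M" using GG Gc by simp
    also have "1\<^sub>m M * P = P" using Pc by simp
    finally show ?thesis using Pc by (auto intro!: eq_matI)
  qed
  obtain r Psi where Psi: "Psi \<in> carrier_mat r M" and OP: "Psi * adj Psi = 1\<^sub>m r"
    and QP: "adj Psi * Psi = P" and re: "rmat P \<longrightarrow> rmat Psi"
    using proj_factor[OF Pc PH PP] by blast
  have aPsi: "adj Psi \<in> carrier_mat M r" using Psi by simp
  have "(of_nat r :: complex) = tr (Psi * adj Psi)" using OP by simp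
  also have "\<dots> = tr (adj Psi * Psi)" by (rule tr_comm[OF Psi aPsi])
  also have "\<dots> = tr (1\<^sub>m M) - tr G" unfolding QP P_def by (rule tr_minus[OF one_carrier_mat Gc])
  also have "tr G = tr (Phi * adj Phi)" unfolding G_def by (rule tr_comm[OF aPhi Phic])
  also have "\<dots> = of_nat n" using O by simp
  finally have "(of_nat r :: complex) = of_nat (M - n)" using nM by (simp add: of_nat_diff)
  then have r: "r = M - n" by (simp only: of_nat_eq_iff)
  have ents: "\<forall>i<M - n. \<forall>j<M. Psi $$ (i,j) \<in> scalars s"
  proof (cases s)
    case True
    have "rmat Phi" using ent True Phic unfolding rmat_def scalars_def by auto
    then have "rmat G" unfolding G_def by (intro rmat_mult[OF aPhi Phic] rmat_adj)
    then have "rmat P" unfolding P_def by (intro rmat_minus[OF one_carrier_mat Gc] rmat_one)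
    then have "rmat Psi" using re by simp
    then show ?thesis using True Psi r unfolding rmat_def scalars_def by auto
  next
    case False
    then show ?thesis unfolding scalars_def by simp
  qed
  have "parseval s M (M - n) Psi" unfolding parseval_def using Psi ents OP r by simp
  moreover have "adj Psi * Psi = 1\<^sub>m M - adj Phi * Phi" using QP unfolding P_def G_def .
  ultimately show ?thesis by blast
qed

theorem proposition14:
  fixes is_real :: bool and k N M :: nat and Phi Psi :: "complex mat"
  assumes "1 \<le> k" and "k \<le> N" and "N < M"
    and "parseval is_real M N Phi"
    and "parseval is_real M (M - N) Psi"
    and "naimark_complements Phi Psi"
  shows "(\<forall>Phi'. parseval is_real M N Phi' \<longrightarrow> V k Phi' \<le> V k Phi) \<longleftrightarrow>
         (\<forall>Psi'. parseval is_real M (M - N) Psi' \<longrightarrow> CV (M - k) Psi' \<le> CV (M - k) Psi)"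
proof -
  have kM: "k \<le> M" using assms(2,3) by simp
  have Phic: "Phi \<in> carrier_mat N M" using assms(4) unfolding parseval_def by simp
  have Psic: "Psi \<in> carrier_mat (M - N) M" and PsiO: "Psi * adj Psi = 1\<^sub>m (M - N)"
    using assms(5) unfolding parseval_def by auto
  have C: "adj Psi * Psi = 1\<^sub>m M - adj Phi * Phi"
    using assms(6) Phic unfolding naimark_complements_def by simp
  have key: "V k Phi = CV (M - k) Psi" by (rule V_CV[OF Phic Psic PsiO C kM])
  show ?thesis
  proof
    assume H: "\<forall>Phi'. parseval is_real M N Phi' \<longrightarrow> V k Phi' \<le> V k Phi"
    show "\<forall>Psi'. parseval is_real M (M - N) Psi' \<longrightarrow> CV (M - k) Psi' \<le> CV (M - k) Psi"
    proof (intro allI impI)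
      fix Psi' assume Psi': "parseval is_real M (M - N) Psi'"
      obtain Phi' where Phi': "parseval is_real M (M - (M - N)) Phi'"
        and C': "adj Phi' * Phi' = 1\<^sub>m M - adj Psi' * Psi'"
        using completion[OF Psi'] by auto
      have Phi'N: "parseval is_real M N Phi'" using Phi' assms(3) by simp
      have Phi'c: "Phi' \<in> carrier_mat N M" using Phi'N unfolding parseval_def by simp
      have Psi'c: "Psi' \<in> carrier_mat (M - N) M" and Psi'O: "Psi' * adj Psi' = 1\<^sub>m (M - N)"
        using Psi' unfolding parseval_def by auto
      have C'': "adj Psi' * Psi' = 1\<^sub>m M - adj Phi' * Phi'" by (rule swap_compl[OF Phi'c Psi'c C'])
      have "CV (M - k) Psi' = V k Phi'" using V_CV[OF Phi'c Psi'c Psi'O C'' kM] by simp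
      also have "\<dots> \<le> V k Phi" using H Phi'N by blast
      finally show "CV (M - k) Psi' \<le> CV (M - k) Psi" using key by simp
    qed
  next
    assume H: "\<forall>Psi'. parseval is_real M (M - N) Psi' \<longrightarrow> CV (M - k) Psi' \<le> CV (M - k) Psi"
    show "\<forall>Phi'. parseval is_real M N Phi' \<longrightarrow> V k Phi' \<le> V k Phi"
    proof (intro allI impI)
      fix Phi' assume Phi': "parseval is_real M N Phi'"
      obtain Psi' where Psi': "parseval is_real M (M - N) Psi'"
        and C': "adj Psi' * Psi' = 1\<^sub>m M - adj Phi' * Phi'"
        using completion[OF Phi'] assms(3) by auto
      have Phi'c: "Phi' \<in> carrier_mat N M" using Phi' unfolding parseval_def by simp
      have Psi'c: "Psi' \<in> carrier_mat (M - N) M" and Psi'O: "Psi' * adj Psi' = 1\<^sub>m (M - N)"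
        using Psi' unfolding parseval_def by auto
      have "V k Phi' = CV (M - k) Psi'" by (rule V_CV[OF Phi'c Psi'c Psi'O C' kM])
      also have "\<dots> \<le> CV (M - k) Psi" using H Psi' by blast
      finally show "V k Phi' \<le> V k Phi" using key by simp
    qed
  qed
qed


end
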